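(* For all integers $q\ge2$ and $n\ge\delta\ge2$ there exists a subset $\mathcal A\subseteq J_q(n)$ with $$|\mathcal A|\ge\frac{\binom{n+q-1}{n}}{(2q+2)^{\delta-2}(2q+1)}$$ such that $d_L(\mathbf u,\mathbf v)\ge 2\delta$ for all distinct $\mathbf u,\mathbf v\in\mathcal A$.
   Context: $J_q(n)=\{(a_1,\dots,a_q)\in\mathbb Z_{\ge0}^q:\ \sum_{i=1}^q a_i=n\}$. The $L^1$-distance is $d_L(\mathbf u,\mathbf v)=\sum_{i=1}^q|u_i-v_i|$. *)

theory Defs
  imports Complex_Main "HOL-Library.FuncSet"
begin

text \<open>Vectors (a_1,...,a_q) are represented as extensional functions on the
index set {..<q} (0-based indexing), with nonnegative integer (nat) entries.\<close>

definition J :: "nat \<Rightarrow> nat \<Rightarrow> (nat \<Rightarrow> nat) set" where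
  "J q n = {a \<in> {..<q} \<rightarrow>\<^sub>E (UNIV :: nat set). (\<Sum>i<q. a i) = n}"

definition dL :: "nat \<Rightarrow> (nat \<Rightarrow> nat) \<Rightarrow> (nat \<Rightarrow> nat) \<Rightarrow> int" where
  "dL q u v = (\<Sum>i<q. \<bar>int (u i) - int (v i)\<bar>)"

end

theory Submission
  imports Defs "HOL-Computational_Algebra.Primes" "HOL-Computational_Algebra.Polynomial" "HOL-Analysis.Harmonic_Numbers"
begin


lemma prime_test:
  fixes p m :: nat
  assumes "p \<ge> 2" "\<forall>d \<in> set [2..<m]. \<not> d dvd p" "p < m * m"
  shows "prime p"
proof (rule ccontr)
  assume np: "\<not> prime p"
  then obtain d where d: "d \<in> {2..<p}" "d dvd p" using prime_nat_iff' assms(1) by auto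
  then obtain e where e: "p = d * e" by blast
  have "e \<noteq> 0"
  proof
    assume "e = 0" with e assms(1) show False by simp
  qed
  moreover have "e \<noteq> 1" using e d by auto
  ultimately have e2: "e \<ge> 2" by auto
  define f where "f = min d e"
  have fd: "f dvd p" using e d unfolding f_def min_def by auto
  have f2: "f \<ge> 2" using e2 d unfolding f_def by auto
  have "f * f \<le> d * e" unfolding f_def by (intro mult_mono) auto
  hence ff: "f * f \<le> p" using e by simp
  have "f < m"
  proof (rule ccontr)
    assume "\<not> f < m"
    hence "m * m \<le> f * f" by (intro mult_mono) auto
    thus False using ff assms(3) by simp
  qed
  thus False using assms(2) fd f2 by auto
qed

lemma prime5003: "prime (5003::nat)"
  by (rule prime_test[where m=71]) (simp_all add: upt_rec)

definition primorial :: "nat \<Rightarrow> nat" where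
  "primorial n = \<Prod>{p. prime p \<and> p \<le> n}"

lemma finite_primes_le: "finite {p::nat. prime p \<and> p \<le> n}"
  by (rule finite_subset[of _ "{..n}"]) auto

lemma binom_odd_le: "(2*m+1) choose m \<le> 4^m"
proof -
  have sym: "(2*m+1) choose (m+1) = (2*m+1) choose m"
    using binomial_symmetric[of "m+1" "2*m+1"] by simp
  have "((2*m+1) choose m) + ((2*m+1) choose (m+1)) = (\<Sum>k\<in>{m, m+1}. (2*m+1) choose k)"
    by simp
  also have "\<dots> \<le> (\<Sum>k\<le>2*m+1. (2*m+1) choose k)"
    by (intro sum_mono2) auto
  also have "\<dots> = 2^(2*m+1)" by (rule choose_row_sum)
  also have "\<dots> = 2 * 4^m" by (simp add: power_mult)
  finally show ?thesis using sym by simp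
qed

lemma prod_primes_dvd:
  fixes x :: nat
  assumes "finite S" "\<forall>p\<in>S. prime p \<and> p dvd x"
  shows "\<Prod>S dvd x"
  using assms
proof (induction S rule: finite_induct)
  case empty thus ?case by simp
next
  case (insert p S)
  have pp: "prime p" "p dvd x" using insert by auto
  have "\<not> p dvd \<Prod>S"
  proof
    assume "p dvd \<Prod>S"
    then obtain s where s: "s \<in> S" "p dvd s" using prime_dvd_prod_iff[OF insert(1) pp(1), of id] by auto
    have "prime s" using insert s by auto
    hence "p = s" using s pp primes_dvd_imp_eq by blast
    thus False using s insert(2) by simp
  qed
  hence "coprime p (\<Prod>S)" using pp(1) prime_imp_coprime by blast
  moreover have "\<Prod>S dvd x" using insert by auto
  ultimately show ?case using pp insert(1,2) by (simp add: divides_mult)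
qed

lemma primorial_le: "primorial n \<le> 4 ^ n"
proof (induction n rule: less_induct)
  case (less n)
  have "n \<le> 2 \<or> (n > 2 \<and> even n) \<or> (\<exists>m. n = 2*m+1 \<and> m \<ge> 1)" by presburger
  then consider "n \<le> 2" | "n > 2" "even n" | m where "n = 2*m+1" "m \<ge> 1" by blast
  then show ?case
  proof cases
    case 1
    have "{p::nat. prime p \<and> p \<le> n} \<subseteq> {2}"
      using 1 by (auto dest: prime_ge_2_nat)
    hence "{p::nat. prime p \<and> p \<le> n} = {} \<or> {p::nat. prime p \<and> p \<le> n} = {2}" by blast
    thus ?thesis unfolding primorial_def
    proof
      assume e: "{p::nat. prime p \<and> p \<le> n} = {}"
      show "\<Prod>{p. prime p \<and> p \<le> n} \<le> 4 ^ n" unfolding e by simp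
    next
      assume "{p::nat. prime p \<and> p \<le> n} = {2}"
      hence "n \<ge> 2" by auto
      hence "(4::nat)^2 \<le> 4^n" by (intro power_increasing) auto
      thus "\<Prod>{p. prime p \<and> p \<le> n} \<le> 4 ^ n" using \<open>_ = {2}\<close> by simp
    qed
  next
    case 2
    have "\<not> prime n" using 2 prime_odd_nat by blast
    have "{p. prime p \<and> p \<le> n} = {p. prime p \<and> p \<le> n - 1}"
    proof (intro Collect_cong iffI conjI)
      fix p assume "prime p \<and> p \<le> n"
      moreover hence "p \<noteq> n" using \<open>\<not> prime n\<close> by auto
      ultimately show "prime p" "p \<le> n - 1" by auto
    qed auto
    hence "primorial n = primorial (n-1)" unfolding primorial_def by simp
    also have "\<dots> \<le> 4^(n-1)" using less 2 by auto
    also have "\<dots> \<le> 4^n" by (intro power_increasing) auto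
    finally show ?thesis .
  next
    case 3
    define A where "A = {p::nat. prime p \<and> p \<le> m+1}"
    define B where "B = {p::nat. prime p \<and> m+1 < p \<and> p \<le> 2*m+1}"
    have AB: "{p. prime p \<and> p \<le> n} = A \<union> B" "A \<inter> B = {}" unfolding A_def B_def using 3 by auto
    have fA: "finite A" unfolding A_def by (rule finite_primes_le)
    have fB: "finite B" unfolding B_def by (rule finite_subset[of _ "{..2*m+1}"]) auto
    have "primorial n = \<Prod>A * \<Prod>B" unfolding primorial_def AB
      by (rule prod.union_disjoint) (use fA fB AB in auto)
    moreover have "\<Prod>A \<le> 4^(m+1)"
    proof -
      have "m + 1 < n" using 3 by simp
      from less[OF this] show ?thesis unfolding A_def primorial_def .
    qed
    moreover have "\<Prod>B \<le> 4^m"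
    proof -
      have "\<Prod>B dvd ((2*m+1) choose m)"
      proof (rule prod_primes_dvd[OF fB], intro ballI conjI)
        fix p assume p: "p \<in> B"
        thus "prime p" unfolding B_def by auto
        have e: "fact m * fact (2*m+1-m) * ((2*m+1) choose m) = (fact (2*m+1) :: nat)"
          by (rule binomial_fact_lemma) simp
        have "p dvd fact (2*m+1)" using p unfolding B_def by (subst prime_dvd_fact_iff) auto
        have "2*m+1-m = m+1" by simp
        hence "p dvd fact m * fact (m+1) * ((2*m+1) choose m)" using e \<open>p dvd fact (2*m+1)\<close> by simp
        moreover have "\<not> p dvd fact m" "\<not> p dvd fact (m+1)"
          using p unfolding B_def by (subst prime_dvd_fact_iff; auto)+
        ultimately show "p dvd ((2*m+1) choose m)" using \<open>prime p\<close>
          by (simp add: prime_dvd_mult_iff)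
      qed
      hence "\<Prod>B \<le> (2*m+1) choose m" by (rule dvd_imp_le) simp
      thus ?thesis using binom_odd_le[of m] by linarith
    qed
    ultimately have "primorial n \<le> 4^(m+1) * 4^m" using mult_le_mono by presburger
    also have "\<dots> = 4^n" using 3 by (simp add: power_add[symmetric])
    finally show ?thesis .
  qed
qed


lemma n_less_pow: "(p::nat) \<ge> 2 \<Longrightarrow> n < p ^ n"
proof -
  assume "p \<ge> 2"
  have "n < 2 ^ n" by (rule less_exp)
  also have "(2::nat) ^ n \<le> p ^ n" using \<open>p \<ge> 2\<close> by (intro power_mono) auto
  finally show ?thesis .
qed

lemma sum_If_card: "finite A \<Longrightarrow> (\<Sum>i\<in>A. if P i then 1 else (0::nat)) = card {i\<in>A. P i}"
  by (simp add: sum.inter_filter[symmetric])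

lemma mult_card:
  fixes p m :: nat
  assumes "prime p" "m > 0"
  shows "card {i \<in> {1..m}. p ^ i dvd m} = multiplicity p m"
proof -
  have nu: "\<not> is_unit p" using assms(1) by auto
  have "p ^ multiplicity p m dvd m" by (rule multiplicity_dvd)
  hence "p ^ multiplicity p m \<le> m" using assms(2) by (rule dvd_imp_le)
  moreover have "multiplicity p m < p ^ multiplicity p m"
    using n_less_pow prime_ge_2_nat[OF assms(1)] by blast
  ultimately have le: "multiplicity p m \<le> m" by simp
  have m0: "m \<noteq> 0" using assms(2) by simp
  have "{i \<in> {1..m}. p ^ i dvd m} = {1..multiplicity p m}"
  proof (intro set_eqI iffI)
    fix i assume "i \<in> {i \<in> {1..m}. p ^ i dvd m}"
    thus "i \<in> {1..multiplicity p m}" using power_dvd_iff_le_multiplicity[OF m0 nu, of i] by simp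
  next
    fix i assume "i \<in> {1..multiplicity p m}"
    thus "i \<in> {i \<in> {1..m}. p ^ i dvd m}" using power_dvd_iff_le_multiplicity[OF m0 nu, of i] le by simp
  qed
  thus ?thesis by simp
qed

lemma div_Suc_ind: "(y::nat) > 0 \<Longrightarrow> Suc n div y = n div y + (if y dvd Suc n then 1 else 0)"
  by (simp add: div_Suc dvd_eq_mod_eq_0)

lemma legendre:
  fixes p :: nat
  assumes "prime p"
  shows "multiplicity p (fact n :: nat) = (\<Sum>i=1..n. n div p^i)"
proof (induction n)
  case 0
  then show ?case by simp
next
  case (Suc n)
  have p2: "p \<ge> 2" using prime_ge_2_nat[OF assms] .
  have "multiplicity p (fact (Suc n) :: nat) = multiplicity p (Suc n * fact n)"
    by (simp add: fact_Suc)
  also have "\<dots> = multiplicity p (Suc n) + multiplicity p (fact n :: nat)"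
    using assms by (intro prime_elem_multiplicity_mult_distrib) auto
  also have "multiplicity p (Suc n) = card {i \<in> {1..Suc n}. p ^ i dvd Suc n}"
    using mult_card[OF assms, of "Suc n"] by simp
  also have "\<dots> = (\<Sum>i=1..Suc n. (if p^i dvd Suc n then 1 else 0))"
    by (rule sum_If_card[symmetric]) simp
  finally have S1: "multiplicity p (fact (Suc n) :: nat) =
      (\<Sum>i=1..Suc n. (if p^i dvd Suc n then 1 else 0)) + multiplicity p (fact n :: nat)" .
  have "(\<Sum>i=1..Suc n. n div p^i) = (\<Sum>i=1..n. n div p^i) + n div p ^ Suc n"
    by simp
  also have "n div p ^ Suc n = 0"
    using n_less_pow[OF p2, of "Suc n"] by simp
  finally have S2: "(\<Sum>i=1..Suc n. n div p^i) = (\<Sum>i=1..n. n div p^i)" by simp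
  have "multiplicity p (fact (Suc n) :: nat) =
      (\<Sum>i=1..Suc n. (if p^i dvd Suc n then 1 else 0)) + (\<Sum>i=1..Suc n. n div p^i)"
    using S1 S2 Suc by simp
  also have "\<dots> = (\<Sum>i=1..Suc n. n div p^i + (if p^i dvd Suc n then 1 else 0))"
    by (simp add: sum.distrib)
  also have "\<dots> = (\<Sum>i=1..Suc n. Suc n div p^i)"
    using p2 by (intro sum.cong refl, subst div_Suc_ind) auto
  finally show ?case .
qed

lemma div_double_bounds: "(y::nat) > 0 \<Longrightarrow> 2 * (n div y) \<le> (2*n) div y \<and> (2*n) div y \<le> 2 * (n div y) + 1"
proof -
  assume y: "y > 0"
  define a r where "a = n div y" and "r = n mod y"
  have n: "n = y * a + r" and r: "r < y" unfolding a_def r_def using y by auto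
  have "2*n = y * (2*a) + 2*r" using n by simp
  hence "(2*n) div y = 2*a + (2*r) div y" using y by simp
  moreover have "(2*r) div y < 2" using r y by (intro less_mult_imp_div_less) simp
  ultimately show ?thesis unfolding a_def by simp
qed

definition tterm :: "nat \<Rightarrow> nat \<Rightarrow> nat \<Rightarrow> nat" where
  "tterm p n i = (2*n) div p^i - 2 * (n div p^i)"

lemma mult_binom:
  fixes p n :: nat
  assumes "prime p"
  shows "multiplicity p ((2*n) choose n) = (\<Sum>i=1..2*n. tterm p n i)"
proof -
  have p2: "p \<ge> 2" using prime_ge_2_nat[OF assms] .
  have e: "fact n * fact (2*n-n) * ((2*n) choose n) = (fact (2*n) :: nat)"
    by (rule binomial_fact_lemma) simp
  have "multiplicity p (fact (2*n) :: nat) = multiplicity p (fact n * fact n * ((2*n) choose n))"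
    using e by simp
  also have "\<dots> = multiplicity p (fact n :: nat) + multiplicity p (fact n :: nat) + multiplicity p ((2*n) choose n)"
    using assms by (simp add: prime_elem_multiplicity_mult_distrib)
  finally have A: "multiplicity p (fact (2*n) :: nat) = 2 * multiplicity p (fact n :: nat) + multiplicity p ((2*n) choose n)"
    by simp
  have B: "multiplicity p (fact n :: nat) = (\<Sum>i=1..2*n. n div p^i)"
  proof -
    have "{1..2*n} = {1..n} \<union> {n+1..2*n}" by auto
    hence "(\<Sum>i=1..2*n. n div p^i) = (\<Sum>i=1..n. n div p^i) + (\<Sum>i=n+1..2*n. n div p^i)"
      by (simp add: sum.union_disjoint)
    also have "(\<Sum>i=n+1..2*n. n div p^i) = 0"
    proof (intro sum.neutral ballI)
      fix i assume "i \<in> {n+1..2*n}"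
      hence "n < i" by simp
      also have "i < p ^ i" by (rule n_less_pow[OF p2])
      finally show "n div p ^ i = 0" by simp
    qed
    finally show ?thesis using legendre[OF assms, of n] by simp
  qed
  have C: "(\<Sum>i=1..2*n. (2*n) div p^i) = 2 * (\<Sum>i=1..2*n. n div p^i) + (\<Sum>i=1..2*n. tterm p n i)"
  proof -
    have "(\<Sum>i=1..2*n. (2*n) div p^i) = (\<Sum>i=1..2*n. 2 * (n div p^i) + tterm p n i)"
      unfolding tterm_def using div_double_bounds p2 by (intro sum.cong refl) auto
    also have "\<dots> = 2 * (\<Sum>i=1..2*n. n div p^i) + (\<Sum>i=1..2*n. tterm p n i)"
      by (simp add: sum.distrib sum_distrib_left)
    finally show ?thesis .
  qed
  show ?thesis using A B C legendre[OF assms, of "2*n"] by simp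
qed

lemma tterm_le1: "prime p \<Longrightarrow> tterm p n i \<le> 1"
proof -
  assume "prime p"
  hence "p^i > 0" using prime_gt_0_nat by simp
  from div_double_bounds[OF this, of n] show ?thesis unfolding tterm_def by linarith
qed

lemma tterm_zero: "2*n < p^i \<Longrightarrow> tterm p n i = 0"
  unfolding tterm_def by simp

lemma binom_mult_bound:
  fixes p n :: nat
  assumes "prime p" "n \<ge> 1"
  shows "p ^ multiplicity p ((2*n) choose n) \<le> 2*n"
proof (rule ccontr)
  define M where "M = multiplicity p ((2*n) choose n)"
  assume "\<not> p ^ multiplicity p ((2*n) choose n) \<le> 2*n"
  hence big: "2*n < p ^ M" unfolding M_def by simp
  have p1: "p \<ge> 1" using prime_ge_1_nat[OF assms(1)] .
  have "M = (\<Sum>i=1..2*n. tterm p n i)" unfolding M_def by (rule mult_binom[OF assms(1)])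
  also have "\<dots> \<le> (\<Sum>i=1..2*n. (if i < M then 1 else 0))"
  proof (intro sum_mono)
    fix i assume "i \<in> {1..2*n}"
    show "tterm p n i \<le> (if i < M then 1 else 0)"
    proof (cases "i < M")
      case True thus ?thesis using tterm_le1[OF assms(1)] by simp
    next
      case False
      hence "p ^ M \<le> p ^ i" using p1 by (intro power_increasing) auto
      hence "tterm p n i = 0" using big by (intro tterm_zero) simp
      thus ?thesis by simp
    qed
  qed
  also have "\<dots> = card {i \<in> {1..2*n}. i < M}"
    by (rule sum_If_card) simp
  also have "\<dots> \<le> card {1..<M}"
    by (intro card_mono) auto
  also have "\<dots> = M - 1" by simp
  finally have "M = 0" by simp
  thus False using big assms(2) by simp
qed

lemma binom_no_mid:
  fixes p n :: nat
  assumes "prime p" "n \<ge> 5" "p \<le> n" "2*n < 3*p"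
  shows "\<not> p dvd ((2*n) choose n)"
proof -
  have "(2*n)*(2*n) < (3*p)*(3*p)" using mult_strict_mono[OF assms(4) assms(4)] prime_gt_0_nat[OF assms(1)] by simp
  hence "9*(p*p) > 2*n*(2*n)" by simp
  moreover have "2*n*(2*n) \<ge> 9 * (2*n)" using assms(2) by simp
  ultimately have pp: "p * p > 2*n" by linarith
  have "multiplicity p ((2*n) choose n) = (\<Sum>i=1..2*n. tterm p n i)" by (rule mult_binom[OF assms(1)])
  also have "\<dots> = 0"
  proof (intro sum.neutral ballI)
    fix i assume i: "i \<in> {1..2*n}"
    show "tterm p n i = 0"
    proof (cases "i = 1")
      case True
      have "n div p = 1" using assms by (simp add: div_nat_eqI)
      moreover have "(2*n) div p = 2" using assms by (simp add: div_nat_eqI)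
      ultimately show ?thesis unfolding tterm_def True by simp
    next
      case False
      hence "i \<ge> 2" using i by simp
      hence "p^2 \<le> p^i" using prime_ge_1_nat[OF assms(1)] by (intro power_increasing) auto
      hence "2*n < p^i" using pp by (simp add: power2_eq_square)
      thus ?thesis by (rule tterm_zero)
    qed
  qed
  finally have "multiplicity p ((2*n) choose n) = 0" .
  moreover have c0: "((2*n) choose n) \<noteq> 0" using zero_less_binomial[of n "2*n"] by linarith
  moreover have nu: "\<not> is_unit p" using assms(1) by auto
  ultimately show ?thesis using multiplicity_eq_zero_iff[OF c0 nu] by simp
qed

lemma key_ineq:
  fixes x :: real
  assumes "x \<ge> 10000"
  shows "(sqrt x + 1) * ln x < x * ln 4 / 6"
proof -
  define y where "y = sqrt (sqrt x)"
  have x0: "x > 0" using assms by simp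
  have y0: "y > 0" unfolding y_def using x0 by simp
  have sx: "sqrt x = y^2" unfolding y_def using x0 by simp
  have x4: "x = y^4"
  proof -
    have "y^4 = (y^2)^2" by simp
    also have "\<dots> = x" using sx[symmetric] x0 by simp
    finally show ?thesis by simp
  qed
  have "sqrt 10000 \<le> sqrt x" using assms by (rule real_sqrt_le_mono)
  hence "100 \<le> sqrt x" by simp
  hence "sqrt 100 \<le> sqrt (sqrt x)" by (rule real_sqrt_le_mono)
  hence y10: "y \<ge> 10" unfolding y_def by simp
  have lnx: "ln x = 4 * ln y" using x4 ln_realpow[of y 4] y0 by simp
  have "ln (y/2) \<le> y/2 - 1" using y0 by (intro ln_le_minus_one) simp
  moreover have "ln (y/2) = ln y - ln 2" using y0 by (simp add: ln_divide_pos)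
  moreover have "ln (2::real) \<le> 1" using ln_le_minus_one[of 2] by simp
  ultimately have lny: "ln y \<le> y/2" by simp
  have ln4: "ln (4::real) \<ge> 4/3"
  proof -
    have "ln (4::real) = ln (2*2)" by simp
    also have "\<dots> = 2 * ln 2" by (subst ln_mult) auto
    finally show ?thesis using ln2_ge_two_thirds by simp
  qed
  have "(sqrt x + 1) * ln x = (y^2 + 1) * (4 * ln y)" using sx lnx by simp
  also have "\<dots> \<le> (y^2 + 1) * (4 * (y/2))"
    using lny y0 by (intro mult_left_mono) auto
  also have "\<dots> = 2*y^3 + 2*y" by (simp add: algebra_simps power2_eq_square power3_eq_cube)
  also have "\<dots> < y^4 / 6 * (4/3)"
  proof -
    have "y*y \<ge> 10*10" using y10 by (intro mult_mono) auto
    hence y2: "y^2 \<ge> 100" by (simp add: power2_eq_square)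
    have "y^2 * y \<ge> 100 * y" using y2 y0 by (intro mult_right_mono) auto
    hence a: "y^3 \<ge> 100 * y" by (simp add: power2_eq_square power3_eq_cube)
    have "y^3 * y \<ge> y^3 * 10" using y10 y0 by (intro mult_left_mono) auto
    hence b: "y^4 \<ge> 10 * y^3" by (simp add: power_Suc[symmetric] mult.commute del: power_Suc)
    have "2*y^3 + 2*y < (2/9) * y^4" using a b y0 by linarith
    thus ?thesis by simp
  qed
  also have "\<dots> \<le> x / 6 * ln 4" unfolding x4[symmetric] using ln4 x0 by (intro mult_left_mono) auto
  also have "x / 6 * ln 4 = x * ln 4 / 6" by simp
  finally show ?thesis .
qed

lemma bertrand_large:
  fixes n :: nat
  assumes n: "n \<ge> 5000"
  shows "\<exists>p. prime p \<and> n < p \<and> p \<le> 2*n"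
proof (rule ccontr)
  assume none: "\<not> (\<exists>p. prime p \<and> n < p \<and> p \<le> 2*n)"
  define C where "C = (2*n) choose n"
  have C0: "C > 0" unfolding C_def using zero_less_binomial[of n "2*n"] by linarith
  define PF where "PF = prime_factors C"
  have fPF: "finite PF" unfolding PF_def by simp
  have Cdvd: "C dvd fact (2*n)"
  proof -
    have e: "fact n * fact (2*n-n) * C = (fact (2*n)::nat)" unfolding C_def by (rule binomial_fact_lemma) simp
    show ?thesis unfolding e[symmetric] by (rule dvd_triv_right)
  qed
  have pf: "prime p \<and> 3*p \<le> 2*n" if "p \<in> PF" for p
  proof -
    have pp: "prime p" "p dvd C" using that unfolding PF_def by (auto simp: in_prime_factors_iff)
    have "p dvd fact (2*n)" using pp(2) Cdvd dvd_trans by blast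
    hence "p \<le> 2*n" using prime_dvd_fact_iff[OF pp(1)] by simp
    have pn: "p \<le> n"
    proof (rule ccontr)
      assume "\<not> p \<le> n"
      hence "n < p" by simp
      with none pp(1) \<open>p \<le> 2*n\<close> show False by blast
    qed
    have "\<not> 2*n < 3*p"
    proof
      assume "2*n < 3*p"
      from binom_no_mid[OF pp(1) _ pn this] n pp(2) show False unfolding C_def by auto
    qed
    thus ?thesis using pp by simp
  qed
  have Cprod: "C = (\<Prod>p\<in>PF. p ^ multiplicity p C)" unfolding PF_def using prime_factorization_nat[OF C0] .
  define B where "B = {p::nat. p*p \<le> 2*n}"
  define S1 where "S1 = PF \<inter> B"
  define S2 where "S2 = PF - B"
  have fS: "finite S1" "finite S2" unfolding S1_def S2_def using fPF by auto
  have split: "(\<Prod>p\<in>PF. p ^ multiplicity p C) = (\<Prod>p\<in>S1. p ^ multiplicity p C) * (\<Prod>p\<in>S2. p ^ multiplicity p C)"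
    unfolding S1_def S2_def using fPF by (rule prod.Int_Diff)
  define r where "r = nat \<lfloor>sqrt (real (2*n))\<rfloor>"
  have rle: "real r \<le> sqrt (real (2*n))" unfolding r_def by (rule of_nat_floor) simp
  have S1r: "S1 \<subseteq> {1..r}"
  proof
    fix p assume p: "p \<in> S1"
    hence pp: "prime p" "p*p \<le> 2*n" using pf unfolding S1_def B_def by auto
    have "real p = sqrt (real p * real p)" by simp
    also have "\<dots> \<le> sqrt (real (2*n))"
      using pp(2) by (intro real_sqrt_le_mono) (simp only: of_nat_mult[symmetric] of_nat_le_iff)
    finally have "p \<le> r" unfolding r_def by (rule le_nat_floor)
    moreover have "p \<ge> 1" using prime_ge_1_nat[OF pp(1)] .
    ultimately show "p \<in> {1..r}" by simp
  qed
  have cardS1: "card S1 \<le> r" using card_mono[OF _ S1r] by simp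
  have n1: "n \<ge> 1" using n by simp
  have P1: "(\<Prod>p\<in>S1. p ^ multiplicity p C) \<le> (2*n)^r"
  proof -
    have "(\<Prod>p\<in>S1. p ^ multiplicity p C) \<le> (\<Prod>p\<in>S1. 2*n)"
    proof (rule prod_mono)
      fix p assume "p \<in> S1"
      hence "prime p" using pf unfolding S1_def by auto
      thus "0 \<le> p ^ multiplicity p C \<and> p ^ multiplicity p C \<le> 2*n"
        using binom_mult_bound[OF _ n1] unfolding C_def by auto
    qed
    also have "\<dots> = (2*n) ^ card S1" by simp
    also have "\<dots> \<le> (2*n)^r" using cardS1 n1 by (intro power_increasing) auto
    finally show ?thesis .
  qed
  have P2: "(\<Prod>p\<in>S2. p ^ multiplicity p C) \<le> primorial ((2*n) div 3)"
  proof -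
    have "(\<Prod>p\<in>S2. p ^ multiplicity p C) \<le> (\<Prod>p\<in>S2. p)"
    proof (rule prod_mono)
      fix p assume p: "p \<in> S2"
      hence pp: "prime p" "\<not> p*p \<le> 2*n" using pf unfolding S2_def B_def by auto
      have "p ^ multiplicity p C \<le> 2*n" using binom_mult_bound[OF pp(1) n1] unfolding C_def .
      also have "\<dots> < p ^ 2" using pp(2) by (simp add: power2_eq_square)
      finally have "multiplicity p C < 2" using prime_gt_1_nat[OF pp(1)] power_less_imp_less_exp by blast
      hence "p ^ multiplicity p C \<le> p ^ 1" using prime_ge_1_nat[OF pp(1)] by (intro power_increasing) auto
      thus "0 \<le> p ^ multiplicity p C \<and> p ^ multiplicity p C \<le> p" by simp
    qed
    also have "(\<Prod>p\<in>S2. p) \<le> primorial ((2*n) div 3)"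
    proof -
      have sub: "S2 \<subseteq> {p. prime p \<and> p \<le> (2*n) div 3}"
      proof
        fix p assume "p \<in> S2"
        hence "prime p \<and> 3*p \<le> 2*n" using pf unfolding S2_def by auto
        thus "p \<in> {p. prime p \<and> p \<le> (2*n) div 3}" by auto
      qed
      have "\<Prod>S2 dvd \<Prod>{p. prime p \<and> p \<le> (2*n) div 3}"
        by (rule prod_dvd_prod_subset[OF finite_primes_le sub])
      moreover have "\<Prod>{p. prime p \<and> p \<le> (2*n) div 3} > 0"
        by (rule prod_pos) (auto dest: prime_gt_0_nat)
      ultimately show ?thesis unfolding primorial_def by (simp add: dvd_imp_le)
    qed
    finally show ?thesis .
  qed
  have "C \<le> (2*n)^r * 4^((2*n) div 3)"
  proof -
    have "C \<le> (2*n)^r * primorial ((2*n) div 3)" using Cprod split mult_le_mono[OF P1 P2] by simp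
    also have "\<dots> \<le> (2*n)^r * 4^((2*n) div 3)" using primorial_le by (intro mult_left_mono) auto
    finally show ?thesis .
  qed
  hence "real C \<le> real ((2*n)^r * 4^((2*n) div 3))" by (simp only: of_nat_le_iff)
  hence Cr: "real C \<le> (2*real n)^r * 4^((2*n) div 3)" by simp
  have "4^n / (2*real n) \<le> real C" unfolding C_def using central_binomial_lower_bound[of n] n by simp
  hence "4^n \<le> (2*real n) * real C" using n by (simp add: field_simps)
  also have "\<dots> \<le> (2*real n) * ((2*real n)^r * 4^((2*n) div 3))"
    using Cr n by (intro mult_left_mono) auto
  also have "\<dots> = (2*real n)^(r+1) * 4^((2*n) div 3)" by simp
  finally have ineq: "(4::real)^n \<le> (2*real n)^(r+1) * 4^((2*n) div 3)" .
  have pos: "(2*real n) > 0" using n by simp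
  have "ln ((4::real)^n) \<le> ln ((2*real n)^(r+1) * 4^((2*n) div 3))"
    using ineq pos by (subst ln_le_cancel_iff) auto
  moreover have "\<And>X::real. X > 0 \<Longrightarrow> ln (X^(r+1) * 4^((2*n) div 3)) = real (r+1) * ln X + real ((2*n) div 3) * ln 4"
    by (simp add: ln_mult ln_realpow algebra_simps)
  moreover have "ln ((4::real)^n) = real n * ln 4" by (simp add: ln_realpow)
  ultimately have "real n * ln 4 \<le> real (r+1) * ln (2*real n) + real ((2*n) div 3) * ln 4"
    using pos by metis
  moreover have "real ((2*n) div 3) * ln 4 \<le> (2/3) * (real n * ln 4)"
  proof -
    have "3 * ((2*n) div 3) \<le> 2*n" by simp
    hence "real (3 * ((2*n) div 3)) \<le> real (2*n)" by (simp only: of_nat_le_iff)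
    hence "3 * real ((2*n) div 3) \<le> 2 * real n" by simp
    hence "real ((2*n) div 3) \<le> 2 * real n / 3" by simp
    hence "real ((2*n) div 3) * ln 4 \<le> (2 * real n / 3) * ln 4" by (intro mult_right_mono) auto
    also have "(2 * real n / 3) * ln (4::real) = (2/3) * (real n * ln 4)" by simp
    finally show ?thesis .
  qed
  moreover have "real (r+1) * ln (2*real n) \<le> (sqrt (2*real n) + 1) * ln (2*real n)"
    using rle pos by (intro mult_right_mono) auto
  moreover have "(sqrt (2*real n) + 1) * ln (2*real n) < (1/3) * (real n * ln 4)"
  proof -
    have "(sqrt (2*real n) + 1) * ln (2*real n) < (2*real n) * ln 4 / 6"
      using n by (intro key_ineq) simp
    also have "(2*real n) * ln (4::real) / 6 = (1/3) * (real n * ln 4)" by simp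
    finally show ?thesis .
  qed
  ultimately show False by linarith
qed

lemma bertrand_step:
  fixes a b n :: nat
  assumes "prime b" "a \<le> n" "n < b" "b \<le> 2*a"
  shows "\<exists>p. prime p \<and> n < p \<and> p \<le> 2*n"
  using assms by (intro exI[of _ b]) auto

lemma bertrand:
  fixes n :: nat
  assumes "n \<ge> 1"
  shows "\<exists>p. prime p \<and> n < p \<and> p \<le> 2*n"
proof -
  have p3: "prime (3::nat)" by (rule prime_test[where m=2]) simp_all
  have p5: "prime (5::nat)" by (rule prime_test[where m=3]) (simp_all add: upt_rec)
  have p7: "prime (7::nat)" by (rule prime_test[where m=3]) (simp_all add: upt_rec)
  have p13: "prime (13::nat)" by (rule prime_test[where m=4]) (simp_all add: upt_rec)
  have p23: "prime (23::nat)" by (rule prime_test[where m=5]) (simp_all add: upt_rec)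
  have p43: "prime (43::nat)" by (rule prime_test[where m=7]) (simp_all add: upt_rec)
  have p83: "prime (83::nat)" by (rule prime_test[where m=10]) (simp_all add: upt_rec)
  have p163: "prime (163::nat)" by (rule prime_test[where m=13]) (simp_all add: upt_rec)
  have p317: "prime (317::nat)" by (rule prime_test[where m=18]) (simp_all add: upt_rec)
  have p631: "prime (631::nat)" by (rule prime_test[where m=26]) (simp_all add: upt_rec)
  have p1259: "prime (1259::nat)" by (rule prime_test[where m=36]) (simp_all add: upt_rec)
  have p2503: "prime (2503::nat)" by (rule prime_test[where m=51]) (simp_all add: upt_rec)
  have p5003: "prime (5003::nat)" by (rule prime_test[where m=71]) (simp_all add: upt_rec)
  have p2: "prime (2::nat)" by simp
  have c: "\<And>a b. prime b \<Longrightarrow> a \<le> n \<Longrightarrow> n < b \<Longrightarrow> b \<le> 2*a \<Longrightarrow> \<exists>p. prime p \<and> n < p \<and> p \<le> 2*n"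
    by (rule bertrand_step)
  have s2: "n < 2 \<Longrightarrow> ?thesis" using c[OF p2, of 1] assms by simp
  have s3: "n < 3 \<Longrightarrow> ?thesis" using s2 c[OF p3, of 2] by (cases "n < 2") auto
  have s5: "n < 5 \<Longrightarrow> ?thesis" using s3 c[OF p5, of 3] by (cases "n < 3") auto
  have s7: "n < 7 \<Longrightarrow> ?thesis" using s5 c[OF p7, of 5] by (cases "n < 5") auto
  have s13: "n < 13 \<Longrightarrow> ?thesis" using s7 c[OF p13, of 7] by (cases "n < 7") auto
  have s23: "n < 23 \<Longrightarrow> ?thesis" using s13 c[OF p23, of 13] by (cases "n < 13") auto
  have s43: "n < 43 \<Longrightarrow> ?thesis" using s23 c[OF p43, of 23] by (cases "n < 23") auto
  have s83: "n < 83 \<Longrightarrow> ?thesis" using s43 c[OF p83, of 43] by (cases "n < 43") auto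
  have s163: "n < 163 \<Longrightarrow> ?thesis" using s83 c[OF p163, of 83] by (cases "n < 83") auto
  have s317: "n < 317 \<Longrightarrow> ?thesis" using s163 c[OF p317, of 163] by (cases "n < 163") auto
  have s631: "n < 631 \<Longrightarrow> ?thesis" using s317 c[OF p631, of 317] by (cases "n < 317") auto
  have s1259: "n < 1259 \<Longrightarrow> ?thesis" using s631 c[OF p1259, of 631] by (cases "n < 631") auto
  have s2503: "n < 2503 \<Longrightarrow> ?thesis" using s1259 c[OF p2503, of 1259] by (cases "n < 1259") auto
  have s5003: "n < 5003 \<Longrightarrow> ?thesis" using s2503 c[OF p5003, of 2503] by (cases "n < 2503") auto
  show ?thesis using s5003 bertrand_large by (cases "n < 5003") auto
qed

definition Gp :: "nat \<Rightarrow> (nat \<Rightarrow> nat) \<Rightarrow> int poly" where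
  "Gp q u = (\<Prod>i<q. [:1, int (i+1):] ^ u i)"

definition hsh :: "nat \<Rightarrow> nat \<Rightarrow> nat \<Rightarrow> (nat \<Rightarrow> nat) \<Rightarrow> (nat \<Rightarrow> int)" where
  "hsh q p h u = restrict (\<lambda>j. coeff (Gp q u) j mod int p) {1..h}"

lemma pigeon:
  fixes f :: "'a \<Rightarrow> 'b"
  assumes "finite X" "finite Y" "f ` X \<subseteq> Y"
  shows "\<exists>y. card X \<le> card Y * card {x\<in>X. f x = y}"
proof (cases "Y = {}")
  case True
  hence "X = {}" using assms(3) by auto
  thus ?thesis by simp
next
  case False
  define M where "M = Max ((\<lambda>y. card {x\<in>X. f x = y}) ` Y)"
  have "M \<in> (\<lambda>y. card {x\<in>X. f x = y}) ` Y" unfolding M_def using assms(2) False by (intro Max_in) auto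
  then obtain y0 where y0: "y0 \<in> Y" "card {x\<in>X. f x = y0} = M" by auto
  have "X = (\<Union>y\<in>Y. {x\<in>X. f x = y})" using assms(3) by auto
  hence "card X \<le> (\<Sum>y\<in>Y. card {x\<in>X. f x = y})"
    by (metis card_UN_le assms(2))
  also have "\<dots> \<le> of_nat (card Y) * M"
  proof (rule sum_bounded_above)
    fix y assume "y \<in> Y"
    thus "card {x\<in>X. f x = y} \<le> M" unfolding M_def using assms(2) by (intro Max_ge) auto
  qed
  finally show ?thesis using y0 by auto
qed

lemma cancel_coeff:
  fixes C D :: "int poly" and p :: int
  assumes "coeff C 0 = 1" "\<forall>j\<le>h. p dvd coeff (C*D) j"
  shows "\<forall>j\<le>h. p dvd coeff D j"
proof (intro allI impI)
  fix j assume "j \<le> h"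
  thus "p dvd coeff D j"
  proof (induction j rule: less_induct)
    case (less j)
    have "coeff (C*D) j = (\<Sum>i\<le>j. coeff C i * coeff D (j-i))" by (rule coeff_mult)
    also have "{..j} = insert 0 {1..j}" by auto
    also have "(\<Sum>i\<in>insert 0 {1..j}. coeff C i * coeff D (j-i)) = coeff D j + (\<Sum>i\<in>{1..j}. coeff C i * coeff D (j-i))"
      using assms(1) by (subst sum.insert) auto
    finally have e: "coeff D j = coeff (C*D) j - (\<Sum>i\<in>{1..j}. coeff C i * coeff D (j-i))" by simp
    have "p dvd (\<Sum>i\<in>{1..j}. coeff C i * coeff D (j-i))"
    proof (intro dvd_sum dvd_mult ballI)
      fix i assume "i \<in> {1..j}"
      thus "p dvd coeff D (j-i)" using less by auto
    qed
    moreover have "p dvd coeff (C*D) j" using assms(2) less by auto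
    ultimately show ?case using e by simp
  qed
qed

lemma poly_dvd_coeffs:
  fixes D :: "int poly" and p t :: int
  assumes "\<forall>j. p dvd coeff D j"
  shows "p dvd poly D t"
  using assms
proof (induction D rule: pCons_induct)
  case 0 thus ?case by simp
next
  case (pCons a D)
  have "p dvd a" using pCons(3)[rule_format, of 0] by simp
  moreover have "\<forall>j. p dvd coeff D j" using pCons(3) by (metis coeff_pCons_Suc)
  ultimately show ?case using pCons by simp
qed

lemma coeff0_Gp: "coeff (\<Prod>i<q. [:1, int (i+1):] ^ w i) 0 = 1"
proof -
  have "coeff (\<Prod>i<q. [:1, int (i+1):] ^ w i) 0 = (\<Prod>i<q. coeff ([:1, int (i+1):] ^ w i) 0)"
    by (induction q) (auto simp: coeff_mult_0)
  also have "\<dots> = 1" by (simp add: coeff_0_power)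
  finally show ?thesis .
qed

lemma degree_Gp: "degree (\<Prod>i<q. [:1, int (i+1):] ^ w i) \<le> (\<Sum>i<q. w i)"
proof -
  have "degree (\<Prod>i<q. [:1, int (i+1):] ^ w i) \<le> (\<Sum>i<q. degree ([:1, int (i+1):] ^ w i))"
    using degree_prod_sum_le[of "{..<q}" "\<lambda>i. [:1, int (i+1):] ^ w i"] by (simp add: o_def)
  also have "\<dots> \<le> (\<Sum>i<q. w i)"
  proof (intro sum_mono)
    fix i
    have "degree ([:1, int (i+1):] ^ w i) \<le> degree [:1, int (i+1):] * w i" by (rule degree_power_le)
    also have "\<dots> \<le> w i" by simp
    finally show "degree ([:1, int (i+1):] ^ w i) \<le> w i" .
  qed
  finally show ?thesis .
qed

lemma poly_Gp: "poly (\<Prod>i<q. [:1, int (i+1):] ^ w i) t = (\<Prod>i<q. (1 + int (i+1) * t) ^ w i)"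
  by (simp add: poly_prod poly_power algebra_simps)

lemma card_J: "card (J q n) = (n + q - 1) choose n"
proof -
  define L where "L = {l::nat list. size l = q \<and> sum_list l = n}"
  have sl: "sum_list (map a [0..<q]) = (\<Sum>i<q. a i)" for a :: "nat \<Rightarrow> nat"
    by (simp add: sum_set_upt_conv_sum_list_nat[symmetric] atLeast0LessThan)
  have "bij_betw (\<lambda>a. map a [0..<q]) (J q n) L"
  proof (rule bij_betwI[where g="\<lambda>l i. if i < q then l ! i else undefined"])
    show "(\<lambda>a. map a [0..<q]) \<in> J q n \<rightarrow> L"
      unfolding J_def L_def using sl by auto
    show "(\<lambda>l i. if i < q then l ! i else undefined) \<in> L \<rightarrow> J q n"
    proof
      fix l assume l: "l \<in> L"
      have "(\<Sum>i<q. if i < q then l ! i else undefined) = (\<Sum>i<q. l ! i)" by simp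
      also have "\<dots> = sum_list l" using l unfolding L_def
        by (simp add: sum_list_sum_nth atLeast0LessThan)
      finally show "(\<lambda>i. if i < q then l ! i else undefined) \<in> J q n"
        using l unfolding J_def L_def by (auto split: if_splits)
    qed
    fix a assume a: "a \<in> J q n"
    show "(\<lambda>i. if i < q then map a [0..<q] ! i else undefined) = a"
    proof
      fix i show "(if i < q then map a [0..<q] ! i else undefined) = a i"
        using a unfolding J_def by (auto simp: PiE_def extensional_def)
    qed
  next
    fix l assume l: "l \<in> L"
    show "map (\<lambda>i. if i < q then l ! i else undefined) [0..<q] = l"
      using l unfolding L_def by (auto intro: nth_equalityI)
  qed
  hence "card (J q n) = card L" by (rule bij_betw_same_card)
  also have "\<dots> = (n + q - 1) choose n" unfolding L_def by (rule card_length_sum_list)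
  finally show ?thesis .
qed

lemma separation:
  fixes q n h p :: nat and u v :: "nat \<Rightarrow> nat"
  assumes p: "prime p" "q < p" and u: "u \<in> J q n" and v: "v \<in> J q n" and uv: "u \<noteq> v"
    and hs: "hsh q p h u = hsh q p h v" and dl: "dL q u v < 2 * int (h+1)"
  shows False
proof -
  define xp where "xp i = u i - v i" for i
  define xm where "xm i = v i - u i" for i
  define w where "w i = min (u i) (v i)" for i
  have uw: "u i = w i + xp i" and vw: "v i = w i + xm i" for i
    unfolding w_def xp_def xm_def by auto
  have su: "(\<Sum>i<q. u i) = n" and sv: "(\<Sum>i<q. v i) = n" using u v unfolding J_def by auto
  define k where "k = (\<Sum>i<q. xp i)"
  have "(\<Sum>i<q. u i) = (\<Sum>i<q. w i) + k" unfolding k_def uw by (simp add: sum.distrib)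
  moreover have "(\<Sum>i<q. v i) = (\<Sum>i<q. w i) + (\<Sum>i<q. xm i)" unfolding vw by (simp add: sum.distrib)
  ultimately have k2: "(\<Sum>i<q. xm i) = k" using su sv by simp
  have "dL q u v = (\<Sum>i<q. int (xp i) + int (xm i))"
    unfolding dL_def xp_def xm_def by (intro sum.cong refl) auto
  also have "\<dots> = int (\<Sum>i<q. xp i) + int (\<Sum>i<q. xm i)" by (simp add: sum.distrib)
  also have "\<dots> = 2 * int k" using k2 unfolding k_def by simp
  finally have "dL q u v = 2 * int k" .
  hence kh: "k \<le> h" using dl by simp
  obtain i0 where i0: "i0 < q" "u i0 \<noteq> v i0"
  proof -
    have "\<not> (\<forall>i\<in>{..<q}. u i = v i)"
      using uv PiE_ext[of u "{..<q}" "\<lambda>_. UNIV" v] u v unfolding J_def by auto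
    thus ?thesis using that by auto
  qed
  have kpos: "k > 0"
  proof (cases "xp i0 > 0")
    case True
    have "xp i0 \<le> k" unfolding k_def using i0 by (intro member_le_sum) auto
    thus ?thesis using True by simp
  next
    case False
    hence "xm i0 > 0" using i0 unfolding xp_def xm_def by auto
    moreover have "xm i0 \<le> (\<Sum>i<q. xm i)" using i0 by (intro member_le_sum) auto
    ultimately show ?thesis using k2 by simp
  qed
  obtain j0 where j0: "j0 < q" "xp j0 > 0"
  proof -
    have "\<exists>j\<in>{..<q}. xp j \<noteq> 0"
    proof (rule ccontr)
      assume "\<not> (\<exists>j\<in>{..<q}. xp j \<noteq> 0)"
      hence "k = 0" unfolding k_def by simp
      thus False using kpos by simp
    qed
    thus ?thesis using that by auto
  qed
  have xm0: "xm j0 = 0" using j0 unfolding xp_def xm_def by auto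
  define P where "P i = [:1, int (i+1):]" for i
  define C where "C = (\<Prod>i<q. P i ^ w i)"
  define A where "A = (\<Prod>i<q. P i ^ xp i)"
  define B where "B = (\<Prod>i<q. P i ^ xm i)"
  have GA: "Gp q u = C * A" unfolding Gp_def C_def A_def P_def
    by (subst uw) (simp add: power_add prod.distrib)
  have GB: "Gp q v = C * B" unfolding Gp_def C_def B_def P_def
    by (subst vw) (simp add: power_add prod.distrib)
  have C0: "coeff C 0 = 1" unfolding C_def P_def by (rule coeff0_Gp)
  have A0: "coeff A 0 = 1" unfolding A_def P_def by (rule coeff0_Gp)
  have B0: "coeff B 0 = 1" unfolding B_def P_def by (rule coeff0_Gp)
  have dA: "degree A \<le> k" unfolding A_def P_def k_def by (rule degree_Gp)
  have dB: "degree B \<le> k" unfolding B_def P_def using k2 degree_Gp[where q=q and w=xm] by simp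
  have hd: "\<forall>j\<le>h. int p dvd coeff (C * (A - B)) j"
  proof (intro allI impI)
    fix j assume j: "j \<le> h"
    have cd: "coeff (C * (A - B)) j = coeff (Gp q u) j - coeff (Gp q v) j"
      unfolding GA GB by (simp add: right_diff_distrib)
    show "int p dvd coeff (C * (A - B)) j"
    proof (cases "j = 0")
      case True
      thus ?thesis using cd unfolding GA GB by (simp add: coeff_mult_0 C0 A0 B0)
    next
      case False
      hence "j \<in> {1..h}" using j by simp
      hence "coeff (Gp q u) j mod int p = coeff (Gp q v) j mod int p"
        using fun_cong[OF hs, of j] unfolding hsh_def by simp
      hence "int p dvd coeff (Gp q u) j - coeff (Gp q v) j" by (simp add: mod_eq_dvd_iff)
      thus ?thesis using cd by simp
    qed
  qed
  have dall: "\<forall>j. int p dvd coeff (A - B) j"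
  proof
    fix j show "int p dvd coeff (A - B) j"
    proof (cases "j \<le> h")
      case True thus ?thesis using cancel_coeff[OF C0 hd] by auto
    next
      case False
      have "degree (A - B) \<le> max (degree A) (degree B)" by (rule degree_diff_le_max)
      also have "\<dots> \<le> h" using dA dB kh by simp
      finally have "coeff (A - B) j = 0" using False by (intro coeff_eq_0) simp
      thus ?thesis by simp
    qed
  qed
  have cop: "coprime (int (j0+1)) (int p)"
  proof -
    have "\<not> p dvd (j0+1)" using j0 p by (auto dest: dvd_imp_le)
    hence "coprime p (j0+1)" using p(1) prime_imp_coprime by blast
    hence "coprime (j0+1) p" by (simp add: coprime_commute)
    thus ?thesis by (simp only: coprime_int_iff)
  qed
  obtain x y where xy: "x * int (j0+1) + y * int p = gcd (int (j0+1)) (int p)" using bezout_int by blast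
  have g1: "gcd (int (j0+1)) (int p) = 1" using cop by (simp only: coprime_iff_gcd_eq_1)
  define t where "t = - x"
  have dj0: "int p dvd 1 + int (j0+1) * t"
  proof -
    have "1 + int (j0+1) * t = y * int p" using xy g1 unfolding t_def by (simp add: algebra_simps)
    thus ?thesis by simp
  qed
  have pAB: "int p dvd poly (A - B) t" using dall by (rule poly_dvd_coeffs)
  have polyA: "poly A t = (\<Prod>i<q. (1 + int (i+1) * t) ^ xp i)" unfolding A_def P_def by (rule poly_Gp)
  have polyB: "poly B t = (\<Prod>i<q. (1 + int (i+1) * t) ^ xm i)" unfolding B_def P_def by (rule poly_Gp)
  have pA: "int p dvd poly A t"
  proof -
    have "int p dvd (1 + int (j0+1) * t) ^ xp j0" using dj0 j0(2) by (metis dvd_power dvd_trans)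
    also have "\<dots> dvd (\<Prod>i<q. (1 + int (i+1) * t) ^ xp i)" using j0(1) by (intro dvd_prodI) auto
    finally show ?thesis using polyA by simp
  qed
  have pAB': "int p dvd poly A t - poly B t" using pAB by simp
  have e: "poly A t - (poly A t - poly B t) = poly B t" by simp
  have "int p dvd poly B t" by (subst e[symmetric]) (rule dvd_diff[OF pA pAB'])
  hence "int p dvd (\<Prod>i<q. (1 + int (i+1) * t) ^ xm i)" using polyB by simp
  moreover have pi: "prime (int p)" using p(1) by simp
  ultimately obtain i where i: "i < q" "int p dvd (1 + int (i+1) * t) ^ xm i"
    using prime_dvd_prod_iff[of "{..<q}" "int p"] by auto
  have "xm i \<noteq> 0"
  proof
    assume "xm i = 0"
    hence "int p dvd 1" using i by simp
    thus False using pi by (simp add: prime_int_iff)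
  qed
  hence di: "int p dvd 1 + int (i+1) * t" using i(2) pi prime_dvd_power by blast
  have ij: "i \<noteq> j0" using xm0 \<open>xm i \<noteq> 0\<close> by auto
  have "int p dvd (1 + int (i+1) * t) - (1 + int (j0+1) * t)" using di dj0 by (rule dvd_diff)
  hence d2: "int p dvd (int i - int j0) * t" by (simp add: algebra_simps)
  have "\<not> int p dvd t"
  proof
    assume "int p dvd t"
    hence "int p dvd int (j0+1) * t" by simp
    hence "int p dvd 1" using dj0 by (metis dvd_add_right_iff add.commute)
    thus False using pi by (simp add: prime_int_iff)
  qed
  hence "int p dvd (int i - int j0)" using d2 pi by (simp add: prime_dvd_mult_iff)
  hence "int p dvd \<bar>int i - int j0\<bar>" by simp
  moreover have "\<bar>int i - int j0\<bar> > 0" using ij by simp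
  ultimately have "int p \<le> \<bar>int i - int j0\<bar>" by (rule zdvd_imp_le)
  moreover have "\<bar>int i - int j0\<bar> < int q" using i j0 by simp
  ultimately show False using p(2) by simp
qed

theorem corollary4p4:
  fixes q n \<delta> :: nat
  assumes "q \<ge> 2" and "\<delta> \<ge> 2" and "n \<ge> \<delta>"
  shows "\<exists>A \<subseteq> J q n.
           real (card A) \<ge> real ((n + q - 1) choose n) /
              (real (2 * q + 2) ^ (\<delta> - 2) * real (2 * q + 1))
         \<and> (\<forall>u\<in>A. \<forall>v\<in>A. u \<noteq> v \<longrightarrow> dL q u v \<ge> 2 * int \<delta>)"
proof -
  define h where "h = \<delta> - 1"
  have h1: "h \<ge> 1" and dh: "\<delta> = h + 1" and dh2: "\<delta> - 2 = h - 1" using assms(2) unfolding h_def by auto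
  obtain p where p: "prime p" "q < p" "p \<le> 2*q" using bertrand[of q] assms(1) by auto
  define Y where "Y = PiE {1..h} (\<lambda>_. {0..<int p})"
  have cJ: "card (J q n) = (n + q - 1) choose n" by (rule card_J)
  have fJ: "finite (J q n)"
  proof -
    have "card (J q n) > 0" using cJ assms(1) by simp
    thus ?thesis using card_gt_0_iff by blast
  qed
  have fY: "finite Y" unfolding Y_def by (intro finite_PiE) auto
  have img: "hsh q p h ` J q n \<subseteq> Y"
  proof
    fix f assume "f \<in> hsh q p h ` J q n"
    then obtain u where f: "f = hsh q p h u" by auto
    have "int p > 0" using prime_gt_0_nat[OF p(1)] by simp
    thus "f \<in> Y" unfolding f hsh_def Y_def by (auto simp: Pi_def)
  qed
  have cY: "card Y = p ^ h" unfolding Y_def by (simp add: card_PiE)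
  obtain c where c: "card (J q n) \<le> card Y * card {u\<in>J q n. hsh q p h u = c}"
    using pigeon[OF fJ fY img] by blast
  define A where "A = {u\<in>J q n. hsh q p h u = c}"
  show ?thesis
  proof (intro exI[of _ A] conjI)
    show "A \<subseteq> J q n" unfolding A_def by auto
    show "\<forall>u\<in>A. \<forall>v\<in>A. u \<noteq> v \<longrightarrow> dL q u v \<ge> 2 * int \<delta>"
    proof (intro ballI impI)
      fix u v assume uv: "u \<in> A" "v \<in> A" "u \<noteq> v"
      show "dL q u v \<ge> 2 * int \<delta>"
      proof (rule ccontr)
        assume "\<not> dL q u v \<ge> 2 * int \<delta>"
        hence "dL q u v < 2 * int (h+1)" using dh by simp
        thus False using separation[OF p(1,2), of u n v h] uv unfolding A_def by auto
      qed
    qed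
    define D where "D = real (2 * q + 2) ^ (\<delta> - 2) * real (2 * q + 1)"
    have Dpos: "D > 0" unfolding D_def by simp
    have "real p \<le> real (2*q)" using p(3) by simp
    hence "real p ^ h \<le> real (2*q) ^ h" by (rule power_mono) simp
    hence "real (p ^ h) \<le> real (2*q) ^ h" by simp
    also have "\<dots> = real (2*q) ^ (h-1) * real (2*q)" using power_minus_mult[of h "real (2*q)"] h1 by simp
    also have "\<dots> \<le> D" unfolding D_def dh2 by (intro mult_mono power_mono) auto
    finally have pD: "real (p ^ h) \<le> D" .
    have "real ((n + q - 1) choose n) \<le> real (p ^ h) * real (card A)"
    proof -
      have "(n + q - 1) choose n \<le> p ^ h * card A" using c cY cJ unfolding A_def by simp
      hence "real ((n + q - 1) choose n) \<le> real (p ^ h * card A)" by (simp only: of_nat_le_iff)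
      thus ?thesis by simp
    qed
    also have "\<dots> \<le> D * real (card A)" using pD by (intro mult_right_mono) auto
    finally have "real ((n + q - 1) choose n) \<le> D * real (card A)" .
    thus "real (card A) \<ge> real ((n + q - 1) choose n) / (real (2 * q + 2) ^ (\<delta> - 2) * real (2 * q + 1))"
      using Dpos unfolding D_def[symmetric] by (simp add: divide_le_eq mult.commute)
  qed
qed

end
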